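(* Let $\Omega$ be a standard star graph and let $f$ be a generic eigenfunction of $\Omega$ with eigenvalue $k^2$ ($k>0$). Assume $f$ has no Neumann points. Then there exists a standard star graph $\widetilde\Omega$ such that: (1) $|\partial\Omega|=|\partial\widetilde\Omega|$; (2) there is a generic eigenfunction $\tilde f$ of $\widetilde\Omega$ with eigenvalue $k^2$; (3) $\tilde f$ has no Neumann points, so $\widetilde\Omega$ is its single Neumann domain; (4) $N(\Omega)+N(\widetilde\Omega)=|\partial\Omega|$ and $\rho(\Omega)+\rho(\widetilde\Omega)=|\partial\Omega|$, where spectral positions and wavelength capacities are taken with respect to $k$.
   Context: A star graph consists of a central vertex joined by edges to degree-one vertices; regarded as a standard graph it carries the Laplacian $-d^2/dx^2$ with Neumann (Kirchhoff) vertex conditions (continuity and vanishing sum of outgoing derivatives). $\partial\Omega$ is the set of degree-one vertices. An eigenfunction is generic if its eigenvalue is simple, it is nonzero at every vertex, and its outgoing derivatives at the non-boundary vertices are nonzero. Neumann points of $f$ are points in edge interiors where $f'=0$. For a graph $\Omega$ with total edge length $|\Omega|$: $N(\Omega):=|\{0\le\lambda<k^2:\lambda\text{ eigenvalue of }\Omega\}|$ (with multiplicity) and $\rho(\Omega):=|\Omega|k/\pi$. *)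

theory Defs
  imports "HOL-Analysis.Analysis" "HOL-Library.Function_Algebras"
begin

text \<open>A star graph with n edges (n >= 2, so that the centre is not itself a
degree-one vertex) is given by edge lengths L 0, ..., L (n-1) > 0.  Edge j is
parametrised by x in [0, L j], with x = 0 the central vertex and x = L j the
j-th degree-one (boundary) vertex.  Hence the boundary has exactly n points.
A function on the graph is a family f :: nat => real => real, f j being the
restriction to edge j; we normalise f j x = 0 off the graph so that the
eigenspaces are genuine (finite-dimensional) subspaces of the function space.\<close>

definition star_graph :: "nat \<Rightarrow> (nat \<Rightarrow> real) \<Rightarrow> bool" where
  "star_graph n L \<longleftrightarrow> n \<ge> 2 \<and> (\<forall>j<n. L j > 0)"

definition total_length :: "nat \<Rightarrow> (nat \<Rightarrow> real) \<Rightarrow> real" where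
  "total_length n L = (\<Sum>j<n. L j)"

text \<open>f solves the eigenvalue problem for -d^2/dx^2 with eigenvalue lam,
continuity and Kirchhoff (zero sum of outgoing derivatives) at the centre,
and Neumann (Kirchhoff) conditions at the degree-one vertices; df is its
derivative along the edges (outgoing from the centre).\<close>

definition eig_sol ::
  "nat \<Rightarrow> (nat \<Rightarrow> real) \<Rightarrow> real \<Rightarrow> (nat \<Rightarrow> real \<Rightarrow> real) \<Rightarrow> (nat \<Rightarrow> real \<Rightarrow> real) \<Rightarrow> bool" where
  "eig_sol n L lam f df \<longleftrightarrow>
     (\<forall>j x. (j \<ge> n \<or> x \<notin> {0..L j}) \<longrightarrow> f j x = 0) \<and>
     (\<exists>ddf. \<forall>j<n. \<forall>x\<in>{0..L j}.
        (f j has_real_derivative df j x) (at x within {0..L j}) \<and>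
        (df j has_real_derivative ddf j x) (at x within {0..L j}) \<and>
        - ddf j x = lam * f j x) \<and>
     (\<forall>i<n. \<forall>j<n. f i 0 = f j 0) \<and>
     (\<Sum>j<n. df j 0) = 0 \<and>
     (\<forall>j<n. df j (L j) = 0)"

definition eigenspace_sg :: "nat \<Rightarrow> (nat \<Rightarrow> real) \<Rightarrow> real \<Rightarrow> (nat \<Rightarrow> real \<Rightarrow> real) set" where
  "eigenspace_sg n L lam = {f. \<exists>df. eig_sol n L lam f df}"

definition fscale :: "real \<Rightarrow> (nat \<Rightarrow> real \<Rightarrow> real) \<Rightarrow> (nat \<Rightarrow> real \<Rightarrow> real)" where
  "fscale c f = (\<lambda>j x. c * f j x)"

definition multiplicity_sg :: "nat \<Rightarrow> (nat \<Rightarrow> real) \<Rightarrow> real \<Rightarrow> nat" where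
  "multiplicity_sg n L lam = vector_space.dim fscale (eigenspace_sg n L lam)"

definition is_eigenvalue_sg :: "nat \<Rightarrow> (nat \<Rightarrow> real) \<Rightarrow> real \<Rightarrow> bool" where
  "is_eigenvalue_sg n L lam \<longleftrightarrow> (\<exists>f\<in>eigenspace_sg n L lam. f \<noteq> 0)"

definition eigenfunction_sg ::
  "nat \<Rightarrow> (nat \<Rightarrow> real) \<Rightarrow> real \<Rightarrow> (nat \<Rightarrow> real \<Rightarrow> real) \<Rightarrow> bool" where
  "eigenfunction_sg n L lam f \<longleftrightarrow> f \<in> eigenspace_sg n L lam \<and> f \<noteq> 0"

text \<open>Generic: simple eigenvalue, nonzero at every vertex (centre and leaves),
nonzero outgoing derivatives at the (only) non-boundary vertex, the centre.\<close>

definition generic_sg ::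
  "nat \<Rightarrow> (nat \<Rightarrow> real) \<Rightarrow> real \<Rightarrow> (nat \<Rightarrow> real \<Rightarrow> real) \<Rightarrow> bool" where
  "generic_sg n L lam f \<longleftrightarrow>
     eigenfunction_sg n L lam f \<and> multiplicity_sg n L lam = 1 \<and>
     (\<forall>j<n. f j 0 \<noteq> 0 \<and> f j (L j) \<noteq> 0) \<and>
     (\<exists>df. eig_sol n L lam f df \<and> (\<forall>j<n. df j 0 \<noteq> 0))"

definition no_neumann_points ::
  "nat \<Rightarrow> (nat \<Rightarrow> real) \<Rightarrow> real \<Rightarrow> (nat \<Rightarrow> real \<Rightarrow> real) \<Rightarrow> bool" where
  "no_neumann_points n L lam f \<longleftrightarrow>
     (\<exists>df. eig_sol n L lam f df \<and> (\<forall>j<n. \<forall>x\<in>{0<..<L j}. df j x \<noteq> 0))"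

definition spec_pos :: "nat \<Rightarrow> (nat \<Rightarrow> real) \<Rightarrow> real \<Rightarrow> nat" where
  "spec_pos n L k = (\<Sum>lam\<in>{lam. 0 \<le> lam \<and> lam < k^2 \<and> is_eigenvalue_sg n L lam}.
                       multiplicity_sg n L lam)"

definition wl_capacity :: "nat \<Rightarrow> (nat \<Rightarrow> real) \<Rightarrow> real \<Rightarrow> real" where
  "wl_capacity n L k = total_length n L * k / pi"

end

theory Submission
  imports Defs
begin



lemma ode_unique:
  fixes f df ddf :: "real \<Rightarrow> real" and L \<mu> x :: real
  assumes D: "\<forall>x\<in>{0..L}. (f has_real_derivative df x) (at x within {0..L}) \<and>
        (df has_real_derivative ddf x) (at x within {0..L}) \<and> - ddf x = \<mu>^2 * f x"
    and dL: "df L = 0" and x: "x \<in> {0..L}"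
  shows "f x = f L * cos (\<mu> * (L - x)) \<and> df x = f L * \<mu> * sin (\<mu> * (L - x))"
proof -
  define A where "A = f L"
  define h where "h y = f y - A * cos (\<mu> * (L - y))" for y
  define h' where "h' y = df y - A * \<mu> * sin (\<mu> * (L - y))" for y
  define E where "E y = (h' y)^2 + \<mu>^2 * (h y)^2" for y
  have Lin: "L \<in> {0..L}" using x by auto
  have hd: "(h has_real_derivative h' y) (at y within {0..L})" if "y \<in> {0..L}" for y
    unfolding h_def h'_def
    using D that by (auto intro!: derivative_eq_intros simp: algebra_simps)
  have h'd: "(h' has_real_derivative (- (\<mu>^2 * h y))) (at y within {0..L})" if "y \<in> {0..L}" for y
  proof -
    have "(h' has_real_derivative (ddf y - A * \<mu> * (cos (\<mu> * (L - y)) * (- \<mu>)))) (at y within {0..L})"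
      unfolding h'_def using D that by (auto intro!: derivative_eq_intros simp: algebra_simps)
    moreover have "ddf y - A * \<mu> * (cos (\<mu> * (L - y)) * (- \<mu>)) = - (\<mu>^2 * h y)"
      using D that unfolding h_def by (force simp: algebra_simps power2_eq_square)
    ultimately show ?thesis by simp
  qed
  have Ed: "(E has_real_derivative 0) (at y within {0..L})" if "y \<in> {0..L}" for y
  proof -
    have "(E has_real_derivative (2 * h' y * (- (\<mu>^2 * h y)) + \<mu>^2 * (2 * h y * h' y))) (at y within {0..L})"
      unfolding E_def using hd[OF that] h'd[OF that]
      by (auto intro!: derivative_eq_intros)
    thus ?thesis by (simp add: algebra_simps)
  qed
  obtain c where c: "\<forall>y\<in>{0..L}. E y = c"
    using has_field_derivative_zero_constant[of "{0..L}" E] Ed by auto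
  have "E L = 0" unfolding E_def h_def h'_def A_def using dL by simp
  hence E0: "E y = 0" if "y \<in> {0..L}" for y using c that Lin by auto
  have h'0: "h' y = 0" if "y \<in> {0..L}" for y
  proof -
    have "(h' y)^2 + \<mu>^2 * (h y)^2 = 0" using E0[OF that] by (simp add: E_def)
    moreover have "\<mu>^2 * (h y)^2 \<ge> 0" by simp
    ultimately have "(h' y)^2 = 0" by (smt (verit) zero_le_power2)
    thus ?thesis by simp
  qed
  have "\<exists>c. \<forall>y\<in>{0..L}. h y = c"
    using has_field_derivative_zero_constant[of "{0..L}" h] hd h'0 by force
  then obtain c2 where c2: "\<forall>y\<in>{0..L}. h y = c2" by blast
  have "h L = 0" by (simp add: h_def A_def)
  hence "h x = 0" using c2 x Lin by auto
  with h'0[OF x] show ?thesis by (simp add: h_def h'_def A_def)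
qed




definition Phi :: "nat \<Rightarrow> (nat \<Rightarrow> real) \<Rightarrow> real \<Rightarrow> (nat \<Rightarrow> real) \<Rightarrow> nat \<Rightarrow> real \<Rightarrow> real" where
  "Phi n L \<mu> A = (\<lambda>j x. if j < n \<and> x \<in> {0..L j} then A j * cos (\<mu> * (L j - x)) else 0)"

definition dPhi :: "(nat \<Rightarrow> real) \<Rightarrow> real \<Rightarrow> (nat \<Rightarrow> real) \<Rightarrow> nat \<Rightarrow> real \<Rightarrow> real" where
  "dPhi L \<mu> A = (\<lambda>j x. A j * \<mu> * sin (\<mu> * (L j - x)))"

definition conds :: "nat \<Rightarrow> (nat \<Rightarrow> real) \<Rightarrow> real \<Rightarrow> (nat \<Rightarrow> real) \<Rightarrow> bool" where
  "conds n L \<mu> A \<longleftrightarrow> (\<forall>i<n. \<forall>j<n. A i * cos (\<mu> * L i) = A j * cos (\<mu> * L j)) \<and>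
      (\<Sum>j<n. A j * \<mu> * sin (\<mu> * L j)) = 0"

lemma eig_sol_Phi:
  assumes Lpos: "\<forall>j<n. L j > 0" and c: "conds n L \<mu> A"
  shows "eig_sol n L (\<mu>^2) (Phi n L \<mu> A) (dPhi L \<mu> A)"
proof -
  define ddf where "ddf = (\<lambda>j x. A j * \<mu> * (cos (\<mu> * (L j - x)) * (- \<mu>)))"
  have der: "(Phi n L \<mu> A j has_real_derivative dPhi L \<mu> A j x) (at x within {0..L j}) \<and>
        (dPhi L \<mu> A j has_real_derivative ddf j x) (at x within {0..L j}) \<and>
        - ddf j x = \<mu>^2 * Phi n L \<mu> A j x" if j: "j < n" and x: "x \<in> {0..L j}" for j x
  proof (intro conjI)
    have "((\<lambda>x. A j * cos (\<mu> * (L j - x))) has_real_derivative dPhi L \<mu> A j x) (at x within {0..L j})"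
      unfolding dPhi_def by (auto intro!: derivative_eq_intros)
    then show "(Phi n L \<mu> A j has_real_derivative dPhi L \<mu> A j x) (at x within {0..L j})"
      by (rule has_field_derivative_transform_within[where d=1]) (use j x in \<open>auto simp: Phi_def\<close>)
    show "(dPhi L \<mu> A j has_real_derivative ddf j x) (at x within {0..L j})"
      unfolding dPhi_def ddf_def by (auto intro!: derivative_eq_intros)
    show "- ddf j x = \<mu>^2 * Phi n L \<mu> A j x"
      using j x by (simp add: ddf_def Phi_def power2_eq_square)
  qed
  show ?thesis
    unfolding eig_sol_def
  proof (intro conjI)
    show "\<forall>j x. (j \<ge> n \<or> x \<notin> {0..L j}) \<longrightarrow> Phi n L \<mu> A j x = 0" by (auto simp: Phi_def)
    show "\<exists>ddf. \<forall>j<n. \<forall>x\<in>{0..L j}.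
        (Phi n L \<mu> A j has_real_derivative dPhi L \<mu> A j x) (at x within {0..L j}) \<and>
        (dPhi L \<mu> A j has_real_derivative ddf j x) (at x within {0..L j}) \<and>
        - ddf j x = \<mu>^2 * Phi n L \<mu> A j x"
      by (rule exI[of _ ddf]) (simp add: der)
    show "\<forall>i<n. \<forall>j<n. Phi n L \<mu> A i 0 = Phi n L \<mu> A j 0"
    proof (intro allI impI)
      fix i j assume ij: "i < n" "j < n"
      have "0 \<le> L i" "0 \<le> L j" using Lpos ij by (auto simp: less_imp_le)
      moreover have "A i * cos (\<mu> * L i) = A j * cos (\<mu> * L j)" using c ij unfolding conds_def by blast
      ultimately show "Phi n L \<mu> A i 0 = Phi n L \<mu> A j 0" using ij by (simp add: Phi_def)
    qed
    show "(\<Sum>j<n. dPhi L \<mu> A j 0) = 0" using c by (simp add: conds_def dPhi_def)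
    show "\<forall>j<n. dPhi L \<mu> A j (L j) = 0" by (simp add: dPhi_def)
  qed
qed


lemma eig_sol_form:
  assumes Lpos: "\<forall>j<n. L j > 0" and e: "eig_sol n L (\<mu>^2) f df"
  shows "f = Phi n L \<mu> (\<lambda>j. f j (L j))" "conds n L \<mu> (\<lambda>j. f j (L j))"
    "\<forall>j<n. \<forall>x\<in>{0..L j}. df j x = f j (L j) * \<mu> * sin (\<mu> * (L j - x))"
proof -
  from e obtain ddf where D: "\<forall>j<n. \<forall>x\<in>{0..L j}.
        (f j has_real_derivative df j x) (at x within {0..L j}) \<and>
        (df j has_real_derivative ddf j x) (at x within {0..L j}) \<and>
        - ddf j x = \<mu>^2 * f j x" using e[unfolded eig_sol_def] by (elim conjE exE) (rule that, assumption)
  note e' = e[unfolded eig_sol_def]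
  have off: "\<forall>j x. (j \<ge> n \<or> x \<notin> {0..L j}) \<longrightarrow> f j x = 0" using e' by (elim conjE) assumption
  have cont: "\<forall>i<n. \<forall>j<n. f i 0 = f j 0" using e' by (elim conjE) assumption
  have ks: "(\<Sum>j<n. df j 0) = 0" using e' by (elim conjE) assumption
  have nb: "\<forall>j<n. df j (L j) = 0" using e' by (elim conjE) assumption
  have F: "f j x = f j (L j) * cos (\<mu> * (L j - x)) \<and> df j x = f j (L j) * \<mu> * sin (\<mu> * (L j - x))"
    if "j < n" "x \<in> {0..L j}" for j x
  proof -
    have "\<forall>x\<in>{0..L j}. (f j has_real_derivative df j x) (at x within {0..L j}) \<and>
        (df j has_real_derivative ddf j x) (at x within {0..L j}) \<and> - ddf j x = \<mu>^2 * f j x"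
      by (intro ballI) (rule D[rule_format, OF that(1)])
    moreover have "df j (L j) = 0" using nb that(1) by simp
    ultimately show ?thesis by (rule ode_unique[OF _ _ that(2)])
  qed
  show "f = Phi n L \<mu> (\<lambda>j. f j (L j))"
  proof (intro ext)
    fix j x
    show "f j x = Phi n L \<mu> (\<lambda>j. f j (L j)) j x"
    proof (cases "j < n \<and> x \<in> {0..L j}")
      case True
      have "f j x = f j (L j) * cos (\<mu> * (L j - x))" using F True by blast
      moreover have "Phi n L \<mu> (\<lambda>j. f j (L j)) j x = f j (L j) * cos (\<mu> * (L j - x))"
        using True by (simp add: Phi_def)
      ultimately show ?thesis by simp
    next
      case False
      have "f j x = 0" using off False by auto
      moreover have "Phi n L \<mu> (\<lambda>j. f j (L j)) j x = 0"
        using False unfolding Phi_def by auto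
      ultimately show ?thesis by simp
    qed
  qed
  show "\<forall>j<n. \<forall>x\<in>{0..L j}. df j x = f j (L j) * \<mu> * sin (\<mu> * (L j - x))" using F by blast
  have z: "0 \<in> {0..L j}" if "j < n" for j using Lpos that by (auto simp: less_imp_le)
  show "conds n L \<mu> (\<lambda>j. f j (L j))"
    unfolding conds_def
  proof (intro conjI allI impI)
    fix i j assume "i < n" "j < n"
    moreover have "f i 0 = f j 0" using cont \<open>i < n\<close> \<open>j < n\<close> by blast
    moreover have "f i 0 = f i (L i) * cos (\<mu> * (L i - 0))" using F z \<open>i < n\<close> by blast
    moreover have "f j 0 = f j (L j) * cos (\<mu> * (L j - 0))" using F z \<open>j < n\<close> by blast
    ultimately show "f i (L i) * cos (\<mu> * L i) = f j (L j) * cos (\<mu> * L j)"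
      by simp
  next
    have "(\<Sum>j<n. f j (L j) * \<mu> * sin (\<mu> * L j)) = (\<Sum>j<n. df j 0)"
    proof (rule sum.cong)
      fix j assume "j \<in> {..<n}"
      hence jn: "j < n" by simp
      have "df j 0 = f j (L j) * \<mu> * sin (\<mu> * (L j - 0))" using F[OF jn z[OF jn]] by (rule conjunct2)
      thus "f j (L j) * \<mu> * sin (\<mu> * L j) = df j 0" by simp
    qed simp
    thus "(\<Sum>j<n. f j (L j) * \<mu> * sin (\<mu> * L j)) = 0" using ks by simp
  qed
qed

lemma eigenspace_char:
  assumes Lpos: "\<forall>j<n. L j > 0"
  shows "eigenspace_sg n L (\<mu>^2) = {Phi n L \<mu> A | A. conds n L \<mu> A}"
  unfolding eigenspace_sg_def
proof (intro set_eqI iffI)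
  fix f assume "f \<in> {f. \<exists>df. eig_sol n L (\<mu>^2) f df}"
  then obtain df where "eig_sol n L (\<mu>^2) f df" by blast
  note ef = eig_sol_form[OF Lpos this]
  show "f \<in> {Phi n L \<mu> A | A. conds n L \<mu> A}"
    by (rule CollectI, rule exI[of _ "\<lambda>j. f j (L j)"], rule conjI, rule ef(1), rule ef(2))
next
  fix f assume "f \<in> {Phi n L \<mu> A | A. conds n L \<mu> A}"
  then obtain A where fA: "f = Phi n L \<mu> A" and cA: "conds n L \<mu> A" by blast
  show "f \<in> {f. \<exists>df. eig_sol n L (\<mu>^2) f df}"
    unfolding fA by (rule CollectI, rule exI, rule eig_sol_Phi[OF Lpos cA])
qed




interpretation vs: vector_space fscale
  by unfold_locales (simp_all add: fscale_def fun_eq_iff algebra_simps)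

lemma sum_fun_app: "(sum g S) j x = (\<Sum>i\<in>S. g i j x)" for g :: "'a \<Rightarrow> nat \<Rightarrow> real \<Rightarrow> real"
  by (induct S rule: infinite_finite_induct) auto

lemma fscale_app: "fscale c f j x = c * f j x" by (simp add: fscale_def)

lemma Phi_cong: "(\<And>j. j < n \<Longrightarrow> A j = B j) \<Longrightarrow> Phi n L \<mu> A = Phi n L \<mu> B"
  by (auto simp: Phi_def fun_eq_iff)

lemma Phi_scale: "Phi n L \<mu> (\<lambda>j. c * A j) = fscale c (Phi n L \<mu> A)"
  by (auto simp: Phi_def fun_eq_iff fscale_def)

lemma Phi_sum: "Phi n L \<mu> (\<lambda>j. \<Sum>i\<in>I. A i j) = (\<Sum>i\<in>I. Phi n L \<mu> (A i))"
  by (auto simp: Phi_def fun_eq_iff sum_fun_app sum_distrib_right)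

lemma Phi_end: "j < n \<Longrightarrow> 0 \<le> L j \<Longrightarrow> Phi n L \<mu> A j (L j) = A j"
  by (simp add: Phi_def)

lemma dim_le0: "V \<subseteq> {0} \<Longrightarrow> vs.dim V = 0"
proof (rule vs.dim_unique[of "{}"])
  show "vs.independent {}" by (rule vs.independent_empty)
qed auto

lemma dim_one: assumes "v \<noteq> 0" "V = range (\<lambda>c. fscale c v)" shows "vs.dim V = 1"
proof (rule vs.dim_unique[of "{v}"])
  show "{v} \<subseteq> V" using assms(2) by (auto intro!: image_eqI[of _ _ 1] simp: fscale_def)
  show "V \<subseteq> vs.span {v}" using assms(2) by (simp add: vs.span_singleton)
  show "vs.independent {v}" using assms(1) by simp
qed simp

lemma mult_zero_if: "eigenspace_sg n L lam \<subseteq> {0} \<Longrightarrow> multiplicity_sg n L lam = 0"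
  unfolding multiplicity_sg_def by (rule dim_le0)

lemma not_eig_sub: "\<not> is_eigenvalue_sg n L lam \<Longrightarrow> eigenspace_sg n L lam \<subseteq> {0}"
  unfolding is_eigenvalue_sg_def by auto

lemma Phi_nonzero: assumes "j < n" "0 \<le> L j" "A j \<noteq> 0" shows "Phi n L \<mu> A \<noteq> 0"
proof
  assume "Phi n L \<mu> A = 0"
  hence "Phi n L \<mu> A j (L j) = 0" by simp
  thus False using Phi_end[of j n L, OF assms(1,2)] assms(3) by simp
qed

lemma dim_mu0:
  assumes Lpos: "\<forall>j<n. L j > 0" and n: "n > 0"
  shows "multiplicity_sg n L 0 = 1"
proof -
  have V: "eigenspace_sg n L (0^2) = range (\<lambda>c. fscale c (Phi n L 0 (\<lambda>_. 1)))"
    unfolding eigenspace_char[OF Lpos]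
  proof (intro set_eqI iffI)
    fix f assume "f \<in> {Phi n L 0 A |A. conds n L 0 A}"
    then obtain A where fA: "f = Phi n L 0 A" and c: "conds n L 0 A" by blast
    have "A j = A 0 * 1" if "j < n" for j
    proof -
      have "A j * cos (0 * L j) = A 0 * cos (0 * L 0)" using c n that unfolding conds_def by blast
      thus ?thesis by simp
    qed
    hence "Phi n L 0 A = Phi n L 0 (\<lambda>j. A 0 * 1)" by (intro Phi_cong)
    thus "f \<in> range (\<lambda>c. fscale c (Phi n L 0 (\<lambda>_. 1)))" unfolding fA Phi_scale by blast
  next
    fix f assume "f \<in> range (\<lambda>c. fscale c (Phi n L 0 (\<lambda>_. 1)))"
    then obtain c where "f = fscale c (Phi n L 0 (\<lambda>_. 1))" by blast
    hence "f = Phi n L 0 (\<lambda>_. c)" using Phi_scale[of n L 0 c "\<lambda>_. 1"] by simp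
    moreover have "conds n L 0 (\<lambda>_. c)" by (simp add: conds_def)
    ultimately show "f \<in> {Phi n L 0 A |A. conds n L 0 A}" by blast
  qed
  have "Phi n L 0 (\<lambda>_. 1) \<noteq> 0" using n Lpos by (intro Phi_nonzero[of 0]) (auto simp: less_imp_le)
  thus ?thesis using dim_one V unfolding multiplicity_sg_def by simp
qed

lemma dim_nopole_zero:
  assumes Lpos: "\<forall>j<n. L j > 0" and n: "n > 0" and nz: "\<forall>j<n. cos (\<mu> * L j) \<noteq> 0"
    and F: "(\<Sum>j<n. tan (\<mu> * L j)) = 0"
  shows "multiplicity_sg n L (\<mu>^2) = 1"
proof -
  define v where "v = Phi n L \<mu> (\<lambda>j. 1 / cos (\<mu> * L j))"
  have V: "eigenspace_sg n L (\<mu>^2) = range (\<lambda>c. fscale c v)"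
    unfolding eigenspace_char[OF Lpos]
  proof (intro set_eqI iffI)
    fix f assume "f \<in> {Phi n L \<mu> A |A. conds n L \<mu> A}"
    then obtain A where fA: "f = Phi n L \<mu> A" and c: "conds n L \<mu> A" by blast
    define c0 where "c0 = A 0 * cos (\<mu> * L 0)"
    have "A j = c0 * (1 / cos (\<mu> * L j))" if "j < n" for j
    proof -
      have "A j * cos (\<mu> * L j) = c0" unfolding c0_def using c that n unfolding conds_def by blast
      thus ?thesis using nz that by (simp add: field_simps)
    qed
    hence "Phi n L \<mu> A = Phi n L \<mu> (\<lambda>j. c0 * (1 / cos (\<mu> * L j)))" by (intro Phi_cong) auto
    thus "f \<in> range (\<lambda>c. fscale c v)" unfolding fA Phi_scale v_def by blast
  next
    fix f assume "f \<in> range (\<lambda>c. fscale c v)"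
    then obtain c where "f = fscale c v" by blast
    hence "f = Phi n L \<mu> (\<lambda>j. c * (1 / cos (\<mu> * L j)))" unfolding v_def Phi_scale by simp
    moreover have "conds n L \<mu> (\<lambda>j. c * (1 / cos (\<mu> * L j)))"
    proof -
      have "(\<Sum>j<n. c * (1 / cos (\<mu> * L j)) * \<mu> * sin (\<mu> * L j)) = c * \<mu> * (\<Sum>j<n. tan (\<mu> * L j))"
        by (simp add: sum_distrib_left tan_def field_simps)
      thus ?thesis using nz F unfolding conds_def by simp
    qed
    ultimately show "f \<in> {Phi n L \<mu> A |A. conds n L \<mu> A}" by blast
  qed
  have "v \<noteq> 0" unfolding v_def using n Lpos nz by (intro Phi_nonzero[of 0]) (auto simp: less_imp_le)
  thus ?thesis using dim_one V unfolding multiplicity_sg_def by simp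
qed

lemma eig_nopole_nonzero:
  assumes Lpos: "\<forall>j<n. L j > 0" and n: "n > 0" and nz: "\<forall>j<n. cos (\<mu> * L j) \<noteq> 0"
    and F: "(\<Sum>j<n. tan (\<mu> * L j)) \<noteq> 0" and mu: "\<mu> \<noteq> 0"
  shows "eigenspace_sg n L (\<mu>^2) \<subseteq> {0}"
  unfolding eigenspace_char[OF Lpos]
proof safe
  fix A assume c: "conds n L \<mu> A"
  define c0 where "c0 = A 0 * cos (\<mu> * L 0)"
  have Aj: "A j = c0 * (1 / cos (\<mu> * L j))" if "j < n" for j
  proof -
    have "A j * cos (\<mu> * L j) = c0" unfolding c0_def using c that n unfolding conds_def by blast
    thus ?thesis using nz that by (simp add: field_simps)
  qed
  have "(\<Sum>j<n. A j * \<mu> * sin (\<mu> * L j)) = (\<Sum>j<n. c0 * (1 / cos (\<mu> * L j)) * \<mu> * sin (\<mu> * L j))"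
    by (rule sum.cong) (use Aj in auto)
  also have "\<dots> = c0 * \<mu> * (\<Sum>j<n. tan (\<mu> * L j))"
    by (simp add: sum_distrib_left tan_def field_simps)
  finally have "c0 * \<mu> * (\<Sum>j<n. tan (\<mu> * L j)) = 0" using c unfolding conds_def by simp
  hence "c0 = 0" using F mu by simp
  hence "Phi n L \<mu> A = Phi n L \<mu> (\<lambda>j. 0 * A j)" using Aj by (intro Phi_cong) auto
  thus "Phi n L \<mu> A = 0" unfolding Phi_scale by (simp add: fscale_def fun_eq_iff)
qed




lemma dim_pole:
  assumes Lpos: "\<forall>j<n. L j > 0" and mu: "\<mu> \<noteq> 0" and sn: "\<forall>j<n. sin (\<mu> * L j) \<noteq> 0"
    and Zdef: "Z = {j. j < n \<and> cos (\<mu> * L j) = 0}" and Zne: "Z \<noteq> {}"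
  shows "multiplicity_sg n L (\<mu>^2) = card Z - 1"
proof -
  obtain j0 where j0: "j0 \<in> Z" using Zne by blast
  define s where "s j = sin (\<mu> * L j)" for j
  define a where "a j = (\<lambda>i. (if i = j then 1 / s j else 0) - (if i = j0 then 1 / s j0 else 0))" for j
  define \<psi> where "\<psi> j = Phi n L \<mu> (a j)" for j
  define B where "B = \<psi> ` (Z - {j0})"
  have finZ: "finite Z" unfolding Zdef by simp
  have Zn: "j < n" if "j \<in> Z" for j using that Zdef by blast
  have Zc: "cos (\<mu> * L j) = 0" if "j \<in> Z" for j using that Zdef by blast
  have s0: "s j \<noteq> 0" if "j < n" for j unfolding s_def using sn that by blast
  have L0: "0 \<le> L j" if "j < n" for j using Lpos that by (simp add: less_imp_le)
  have ev: "\<psi> j i (L i) = (if i = j then 1 / s j else 0)" if "i \<in> Z - {j0}" "j \<in> Z - {j0}" for i j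
  proof -
    have "\<psi> j i (L i) = a j i" unfolding \<psi>_def using Zn L0 that by (intro Phi_end) auto
    thus ?thesis using that unfolding a_def by auto
  qed
  have inj: "inj_on \<psi> (Z - {j0})"
  proof (rule inj_onI)
    fix j j' assume jj: "j \<in> Z - {j0}" "j' \<in> Z - {j0}" "\<psi> j = \<psi> j'"
    have "\<psi> j j (L j) = 1 / s j" using ev[OF jj(1) jj(1)] by simp
    moreover have "\<psi> j' j (L j) = (if j = j' then 1 / s j' else 0)" using ev[OF jj(1) jj(2)] .
    moreover have "\<psi> j j (L j) = \<psi> j' j (L j)" using jj(3) by simp
    ultimately have "1 / s j = (if j = j' then 1 / s j' else 0)" by simp
    moreover have "s j \<noteq> 0" using s0 Zn jj(1) by blast
    ultimately show "j = j'" by (cases "j = j'") auto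
  qed
  have cardB: "card B = card Z - 1"
  proof -
    have "card B = card (Z - {j0})" unfolding B_def by (rule card_image[OF inj])
    also have "\<dots> = card Z - 1" using j0 by (rule card_Diff_singleton)
    finally show ?thesis .
  qed
  have sumA: "(\<Sum>i<n. a j i * \<mu> * s i) = 0" if "j \<in> Z - {j0}" for j
  proof -
    have "(\<Sum>i<n. a j i * \<mu> * s i) = (\<Sum>i<n. (if i = j then \<mu> else 0) - (if i = j0 then \<mu> else 0))"
    proof (rule sum.cong)
      fix i assume "i \<in> {..<n}"
      hence "s i \<noteq> 0" using s0 by simp
      thus "a j i * \<mu> * s i = (if i = j then \<mu> else 0) - (if i = j0 then \<mu> else 0)"
        unfolding a_def by (auto simp: field_simps)
    qed simp
    also have "\<dots> = 0" using that Zn j0 by (simp add: sum_subtractf)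
    finally show ?thesis .
  qed
  have BV: "B \<subseteq> eigenspace_sg n L (\<mu>^2)"
    unfolding eigenspace_char[OF Lpos] B_def
  proof (rule subsetI)
    fix x assume "x \<in> \<psi> ` (Z - {j0})"
    then obtain j where j: "j \<in> Z" "j \<notin> {j0}" and xj: "x = \<psi> j" by blast
    have "conds n L \<mu> (a j)"
      unfolding conds_def
    proof (intro conjI allI impI)
      have z: "a j i * cos (\<mu> * L i) = 0" if "i < n" for i
      proof (cases "i = j \<or> i = j0")
        case True thus ?thesis using Zc j j0 by auto
      next
        case False thus ?thesis unfolding a_def by simp
      qed
      fix i i' assume "i < n" "i' < n"
      thus "a j i * cos (\<mu> * L i) = a j i' * cos (\<mu> * L i')" using z[of i] z[of i'] by (metis mult_eq_0_iff)
    next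
      show "(\<Sum>i<n. a j i * \<mu> * sin (\<mu> * L i)) = 0" using sumA[of j] j unfolding s_def by simp
    qed
    thus "x \<in> {Phi n L \<mu> A |A. conds n L \<mu> A}" unfolding xj \<psi>_def by blast
  qed
  have VB: "eigenspace_sg n L (\<mu>^2) \<subseteq> vs.span B"
    unfolding eigenspace_char[OF Lpos]
  proof (rule subsetI)
    fix x assume "x \<in> {Phi n L \<mu> A |A. conds n L \<mu> A}"
    then obtain A where c: "conds n L \<mu> A" and xA: "x = Phi n L \<mu> A" by blast
    have Aoff: "A i = 0" if "i < n" "i \<notin> Z" for i
    proof -
      have "A i * cos (\<mu> * L i) = A j0 * cos (\<mu> * L j0)" using c that Zn[OF j0] unfolding conds_def by blast
      hence "A i * cos (\<mu> * L i) = 0" using Zc[OF j0] by simp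
      moreover have "cos (\<mu> * L i) \<noteq> 0" using that Zdef by blast
      ultimately show ?thesis by simp
    qed
    have S0: "(\<Sum>i<n. A i * s i) = 0"
    proof -
      have "(\<Sum>i<n. A i * \<mu> * sin (\<mu> * L i)) = 0" using c unfolding conds_def by blast
      hence "\<mu> * (\<Sum>i<n. A i * s i) = 0" by (simp add: sum_distrib_left s_def mult_ac)
      thus ?thesis using mu by simp
    qed
    have "(\<Sum>i<n. A i * s i) = (\<Sum>i\<in>Z. A i * s i)"
      by (rule sum.mono_neutral_right) (use Zn Aoff in auto)
    also have "\<dots> = A j0 * s j0 + (\<Sum>i\<in>Z - {j0}. A i * s i)"
      using finZ j0 by (simp add: sum.remove)
    finally have S1: "(\<Sum>i\<in>Z - {j0}. A i * s i) = - (A j0 * s j0)" using S0 by simp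
    have comp: "A i = (\<Sum>j\<in>Z - {j0}. (A j * s j) * a j i)" if "i < n" for i
    proof -
      have "(\<Sum>j\<in>Z - {j0}. (A j * s j) * a j i) =
            (\<Sum>j\<in>Z - {j0}. (if i = j then A j * s j / s j else 0)) -
            (\<Sum>j\<in>Z - {j0}. (if i = j0 then A j * s j / s j0 else 0))"
        unfolding sum_subtractf[symmetric] by (rule sum.cong) (auto simp: a_def)
      also have "\<dots> = (if i \<in> Z - {j0} then A i else 0) - (if i = j0 then - A j0 else 0)"
      proof -
        have "(\<Sum>j\<in>Z - {j0}. (if i = j then A j * s j / s j else 0)) = (if i \<in> Z - {j0} then A i else 0)"
          using finZ s0 Zn by (simp add: sum.delta')
        moreover have "(\<Sum>j\<in>Z - {j0}. (if i = j0 then A j * s j / s j0 else 0)) = (if i = j0 then - A j0 else 0)"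
          using S1 s0[OF Zn[OF j0]] by (simp add: sum_divide_distrib[symmetric])
        ultimately show ?thesis by simp
      qed
      also have "\<dots> = A i" using Aoff[OF that] j0 by auto
      finally show ?thesis by simp
    qed
    have "Phi n L \<mu> A = Phi n L \<mu> (\<lambda>i. \<Sum>j\<in>Z - {j0}. (A j * s j) * a j i)"
      by (rule Phi_cong) (rule comp)
    also have "\<dots> = (\<Sum>j\<in>Z - {j0}. fscale (A j * s j) (\<psi> j))"
      unfolding Phi_sum \<psi>_def Phi_scale ..
    also have "\<dots> \<in> vs.span B"
      unfolding B_def by (intro vs.span_sum vs.span_scale vs.span_base) auto
    finally show "x \<in> vs.span B" unfolding xA .
  qed
  have indB: "vs.independent B"
  proof
    assume "vs.dependent B"
    moreover have "finite B" unfolding B_def using finZ by simp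
    ultimately obtain u where u: "\<exists>v\<in>B. u v \<noteq> 0" and su: "(\<Sum>v\<in>B. fscale (u v) v) = 0"
      using vs.dependent_finite by blast
    have "u (\<psi> i) = 0" if i: "i \<in> Z - {j0}" for i
    proof -
      have "(\<Sum>v\<in>B. fscale (u v) v) i (L i) = 0" using su by simp
      hence "(\<Sum>j\<in>Z - {j0}. u (\<psi> j) * \<psi> j i (L i)) = 0"
        unfolding B_def sum_fun_app fscale_app using sum.reindex[OF inj, of "\<lambda>v. u v * v i (L i)"] by simp
      moreover have "(\<Sum>j\<in>Z - {j0}. u (\<psi> j) * \<psi> j i (L i)) = (\<Sum>j\<in>Z - {j0}. (if i = j then u (\<psi> j) / s j else 0))"
      proof (rule sum.cong)
        fix j assume j: "j \<in> Z - {j0}"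
        show "u (\<psi> j) * \<psi> j i (L i) = (if i = j then u (\<psi> j) / s j else 0)" using ev[OF i j] by simp
      qed simp
      ultimately have "(\<Sum>j\<in>Z - {j0}. (if i = j then u (\<psi> j) / s j else 0)) = 0" by simp
      hence "u (\<psi> i) / s i = 0" using i finZ by (simp add: sum.delta)
      thus ?thesis using s0 Zn i by auto
    qed
    thus False using u unfolding B_def by auto
  qed
  show ?thesis unfolding multiplicity_sg_def
    by (rule vs.dim_unique[OF BV VB indB cardB])
qed




lemma cos_pos_lt: "0 < x \<Longrightarrow> x < pi/2 \<Longrightarrow> cos x > 0"
  by (rule cos_gt_zero_pi) auto

lemma cos_neg_gt: "pi/2 < x \<Longrightarrow> x < pi \<Longrightarrow> cos x < 0"
proof -
  assume a: "pi/2 < x" "x < pi"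
  have "cos x < cos (pi/2)" using a by (subst cos_mono_less_eq) auto
  thus ?thesis by simp
qed

lemma cos_zero_range: "0 < x \<Longrightarrow> x < pi \<Longrightarrow> cos x = 0 \<longleftrightarrow> x = pi/2"
proof (cases "x = pi/2")
  case False
  then show "0 < x \<Longrightarrow> x < pi \<Longrightarrow> ?thesis" using cos_pos_lt[of x] cos_neg_gt[of x] by (cases "x < pi/2") auto
next
  case True
  show "0 < x \<Longrightarrow> x < pi \<Longrightarrow> ?thesis" unfolding True by simp
qed

lemma tan_mono_branch:
  assumes "0 < x" "x < y" "y < pi" "y < pi/2 \<or> pi/2 < x"
  shows "tan x < tan y"
proof -
  have cc: "cos x * cos y > 0"
  proof (cases "y < pi/2")
    case True
    then show ?thesis using assms cos_pos_lt[of x] cos_pos_lt[of y] by simp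
  next
    case False
    hence "pi/2 < x" using assms by simp
    then show ?thesis using assms cos_neg_gt[of x] cos_neg_gt[of y] by (simp add: mult_neg_neg)
  qed
  have "cos x \<noteq> 0" "cos y \<noteq> 0" using cc by auto
  hence "tan y - tan x = sin (y - x) / (cos x * cos y)"
    by (simp add: tan_def sin_diff field_simps)
  moreover have "sin (y - x) > 0" using assms by (intro sin_gt_zero) auto
  ultimately have "tan y - tan x > 0" using cc by simp
  thus ?thesis by simp
qed

lemma tan_big_left: "\<exists>d>0. \<forall>x. pi/2 - d < x \<and> x < pi/2 \<longrightarrow> M < tan x"
proof -
  have "eventually (\<lambda>x. M + 1 \<le> tan x) (at_left (pi/2))"
    using filterlim_tan_at_left unfolding filterlim_at_top by blast
  then obtain b where b: "b < pi/2" "\<forall>y>b. y < pi/2 \<longrightarrow> M + 1 \<le> tan y"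
    unfolding eventually_at_left_field by blast
  show ?thesis
    by (rule exI[of _ "pi/2 - b"]) (use b in force)
qed

lemma tan_small_right: "\<exists>d>0. \<forall>x. pi/2 < x \<and> x < pi/2 + d \<longrightarrow> tan x < M"
proof -
  have "eventually (\<lambda>x. tan x \<le> M - 1) (at_right (- (pi/2)))"
    using filterlim_tan_at_right unfolding filterlim_at_bot by blast
  then obtain b where b: "b > - (pi/2)" "\<forall>y> - (pi/2). y < b \<longrightarrow> tan y \<le> M - 1"
    unfolding eventually_at_right_field by blast
  show ?thesis
  proof (rule exI[of _ "b + pi/2"], intro conjI allI impI)
    show "b + pi/2 > 0" using b by simp
    fix x assume x: "pi/2 < x \<and> x < pi/2 + (b + pi/2)"
    have "tan (x - pi) \<le> M - 1" using b(2) x by simp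
    moreover have "tan (x - pi) = tan x" using tan_periodic_pi[of "x - pi"] by simp
    ultimately show "tan x < M" by simp
  qed
qed

lemma isCont_tan_lin: "cos (m * c) \<noteq> 0 \<Longrightarrow> isCont (\<lambda>x. tan (x * c)) m"
  by (rule isCont_o2[OF _ isCont_tan]) (auto intro!: continuous_intros)




context
  fixes n :: nat and L :: "nat \<Rightarrow> real" and k :: real
  assumes Lpos: "\<forall>j<n. L j > 0" and n2: "n \<ge> 2" and kpos: "k > 0"
    and kL: "\<forall>j<n. k * L j < pi" and cosk: "\<forall>j<n. cos (k * L j) \<noteq> 0"
    and Fk: "(\<Sum>j<n. tan (k * L j)) = 0"
begin

definition sF :: "real \<Rightarrow> real" where "sF \<mu> = (\<Sum>j<n. tan (\<mu> * L j))"
definition pole :: "nat \<Rightarrow> real" where "pole j = pi / (2 * L j)"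
definition Jset :: "nat set" where "Jset = {j. j < n \<and> pi/2 < k * L j}"
definition Pset :: "real set" where "Pset = pole ` Jset"
definition Zset :: "real \<Rightarrow> nat set" where "Zset \<mu> = {j. j < n \<and> cos (\<mu> * L j) = 0}"
definition Zs :: "real set" where "Zs = {\<mu>. 0 < \<mu> \<and> \<mu> < k \<and> Zset \<mu> = {} \<and> sF \<mu> = 0}"

lemma Lp: "j < n \<Longrightarrow> L j > 0" using Lpos by blast

lemma th_range: "0 < \<mu> \<Longrightarrow> \<mu> \<le> k \<Longrightarrow> j < n \<Longrightarrow> 0 < \<mu> * L j \<and> \<mu> * L j < pi"
proof -
  assume a: "0 < \<mu>" "\<mu> \<le> k" "j < n"
  have "\<mu> * L j \<le> k * L j" using a Lp[of j] by (intro mult_right_mono) auto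
  moreover have "k * L j < pi" using kL a(3) by blast
  moreover have "0 < \<mu> * L j" using a Lp[of j] by simp
  ultimately show ?thesis by linarith
qed

lemma pole_lt_iff: "j < n \<Longrightarrow> (pole j < \<mu> \<longleftrightarrow> pi/2 < \<mu> * L j)"
  using Lp[of j] by (simp add: pole_def field_simps)

lemma pole_gt_iff: "j < n \<Longrightarrow> (\<mu> < pole j \<longleftrightarrow> \<mu> * L j < pi/2)"
  using Lp[of j] by (simp add: pole_def field_simps)

lemma pole_eq_iff: "j < n \<Longrightarrow> (pole j = \<mu> \<longleftrightarrow> \<mu> * L j = pi/2)"
  using Lp[of j] by (auto simp: pole_def field_simps)

lemma pole_pos: "j < n \<Longrightarrow> pole j > 0"
  using Lp[of j] by (simp add: pole_def)

lemma cos_zero_pole: "0 < \<mu> \<Longrightarrow> \<mu> \<le> k \<Longrightarrow> j < n \<Longrightarrow> cos (\<mu> * L j) = 0 \<longleftrightarrow> pole j = \<mu>"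
  using th_range[of \<mu> j] cos_zero_range[of "\<mu> * L j"] pole_eq_iff[of j \<mu>] by simp

lemma notJ: "j < n \<Longrightarrow> j \<notin> Jset \<Longrightarrow> k * L j < pi/2"
proof -
  assume a: "j < n" "j \<notin> Jset"
  have "k * L j \<noteq> pi/2"
  proof
    assume e: "k * L j = pi/2"
    have "cos (k * L j) = 0" unfolding e by simp
    thus False using cosk a(1) by blast
  qed
  thus ?thesis using a unfolding Jset_def by auto
qed

lemma J_sub: "Jset \<subseteq> {..<n}" unfolding Jset_def by auto

lemma finJ: "finite Jset" using J_sub finite_subset by blast

lemma finP: "finite Pset" unfolding Pset_def using finJ by simp

lemma P_range: "p \<in> Pset \<Longrightarrow> 0 < p \<and> p < k"
  unfolding Pset_def Jset_def using pole_pos pole_lt_iff by auto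

lemma Zset_eq: "0 < \<mu> \<Longrightarrow> \<mu> < k \<Longrightarrow> Zset \<mu> = {j \<in> Jset. pole j = \<mu>}"
proof (intro set_eqI iffI)
  fix j assume a: "0 < \<mu>" "\<mu> < k" "j \<in> Zset \<mu>"
  hence j: "j < n" "pole j = \<mu>" using cos_zero_pole[of \<mu> j] unfolding Zset_def by auto
  hence "j \<in> Jset" using a pole_lt_iff[of j k] unfolding Jset_def by auto
  thus "j \<in> {j \<in> Jset. pole j = \<mu>}" using j by simp
next
  fix j assume a: "0 < \<mu>" "\<mu> < k" "j \<in> {j \<in> Jset. pole j = \<mu>}"
  hence "j < n" "pole j = \<mu>" unfolding Jset_def by auto
  thus "j \<in> Zset \<mu>" using a cos_zero_pole[of \<mu> j] unfolding Zset_def by auto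
qed

lemma inP_iff: "0 < \<mu> \<Longrightarrow> \<mu> < k \<Longrightarrow> \<mu> \<in> Pset \<longleftrightarrow> Zset \<mu> \<noteq> {}"
  using Zset_eq[of \<mu>] unfolding Pset_def by auto

lemma sF_mono:
  assumes "0 < a" "a < b" "b \<le> k" "\<forall>j<n. b * L j < pi/2 \<or> pi/2 < a * L j"
  shows "sF a < sF b"
  unfolding sF_def
proof (rule sum_strict_mono)
  have "0 \<in> {..<n}" using n2 by simp
  thus "{..<n} \<noteq> {}" by blast
  fix j assume "j \<in> {..<n}"
  hence j: "j < n" by simp
  have "a * L j < b * L j" using assms Lp[OF j] by simp
  moreover have "0 < a * L j" "b * L j < pi" using th_range[of a j] th_range[of b j] assms j by auto
  ultimately show "tan (a * L j) < tan (b * L j)" using assms(4) j by (intro tan_mono_branch) auto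
qed simp

lemma nopole_crit:
  assumes "0 < a" "a < b" "b \<le> k" "\<forall>p\<in>Pset. \<not> (a \<le> p \<and> p \<le> b)"
  shows "\<forall>j<n. b * L j < pi/2 \<or> pi/2 < a * L j"
proof (intro allI impI)
  fix j assume j: "j < n"
  show "b * L j < pi/2 \<or> pi/2 < a * L j"
  proof (cases "j \<in> Jset")
    case True
    hence "pole j \<in> Pset" unfolding Pset_def by simp
    hence "pole j < a \<or> b < pole j" using assms(4) by force
    thus ?thesis using pole_lt_iff[OF j] pole_gt_iff[OF j] by auto
  next
    case False
    have "b * L j \<le> k * L j" using assms Lp[OF j] by (intro mult_right_mono) auto
    thus ?thesis using notJ[OF j False] by auto
  qed
qed

lemma sF_pos_below:
  assumes "0 < \<mu>" "\<mu> \<le> k" "\<forall>j<n. \<mu> * L j < pi/2"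
  shows "sF \<mu> > 0"
  unfolding sF_def
proof (rule sum_pos)
  have "0 \<in> {..<n}" using n2 by simp
  thus "{..<n} \<noteq> {}" by blast
  fix j assume "j \<in> {..<n}"
  thus "0 < tan (\<mu> * L j)" using assms th_range[of \<mu> j] by (intro tan_gt_zero) auto
qed simp

lemma P_ne: "Pset \<noteq> {}"
proof
  assume "Pset = {}"
  hence "Jset = {}" unfolding Pset_def by simp
  hence "\<forall>j<n. k * L j < pi/2" using notJ by blast
  hence "sF k > 0" using kpos by (intro sF_pos_below) auto
  thus False using Fk unfolding sF_def by simp
qed

lemma sF_pos_low: "0 < \<mu> \<Longrightarrow> \<mu> < Min Pset \<Longrightarrow> sF \<mu> > 0"
proof -
  assume a: "0 < \<mu>" "\<mu> < Min Pset"
  have mk: "\<mu> < k" using a P_range[of "Min Pset"] Min_in[OF finP P_ne] by auto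
  have "\<forall>j<n. \<mu> * L j < pi/2"
  proof (intro allI impI)
    fix j assume j: "j < n"
    show "\<mu> * L j < pi/2"
    proof (cases "j \<in> Jset")
      case True
      hence "Min Pset \<le> pole j" using finP unfolding Pset_def by simp
      hence "\<mu> < pole j" using a by linarith
      thus ?thesis using pole_gt_iff[OF j] by blast
    next
      case False
      have "\<mu> * L j \<le> k * L j" using mk Lp[OF j] by (intro mult_right_mono) auto
      thus ?thesis using notJ[OF j False] by simp
    qed
  qed
  thus ?thesis using a mk by (intro sF_pos_below) auto
qed

lemma sF_neg_high: "Max Pset < \<mu> \<Longrightarrow> \<mu> < k \<Longrightarrow> sF \<mu> < 0"
proof -
  assume a: "Max Pset < \<mu>" "\<mu> < k"
  have mp: "0 < \<mu>" using a P_range[of "Max Pset"] Max_in[OF finP P_ne] by auto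
  have "\<forall>p\<in>Pset. \<not> (\<mu> \<le> p \<and> p \<le> k)" using a finP Max_ge by fastforce
  hence "sF \<mu> < sF k" using a mp by (intro sF_mono nopole_crit) auto
  thus ?thesis using Fk unfolding sF_def by simp
qed

lemma sF_cont: "(\<forall>j<n. cos (\<mu> * L j) \<noteq> 0) \<Longrightarrow> isCont sF \<mu>"
  unfolding sF_def[abs_def] by (intro isCont_sum ballI isCont_tan_lin) auto


lemma sF_split:
  assumes q: "0 < q" "q < k"
  shows "sF \<mu> = real (card (Zset q)) * tan (\<mu> * (pi / (2 * q))) + (\<Sum>j\<in>{..<n} - Zset q. tan (\<mu> * L j))"
proof -
  have sub: "Zset q \<subseteq> {..<n}" unfolding Zset_def by auto
  have "sF \<mu> = (\<Sum>j\<in>{..<n} - Zset q. tan (\<mu> * L j)) + (\<Sum>j\<in>Zset q. tan (\<mu> * L j))"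
    unfolding sF_def by (rule sum.subset_diff[OF sub]) simp
  moreover have "(\<Sum>j\<in>Zset q. tan (\<mu> * L j)) = (\<Sum>j\<in>Zset q. tan (\<mu> * (pi / (2 * q))))"
  proof (rule sum.cong)
    fix j assume j: "j \<in> Zset q"
    hence jn: "j < n" and "pole j = q" using Zset_eq[OF q] unfolding Jset_def by auto
    hence "L j = pi / (2 * q)" using Lp[OF jn] q unfolding pole_def by (auto simp: field_simps)
    thus "tan (\<mu> * L j) = tan (\<mu> * (pi / (2 * q)))" by simp
  qed simp
  ultimately show ?thesis by simp
qed

lemma R_cont:
  assumes q: "0 < q" "q < k"
  shows "isCont (\<lambda>\<mu>. \<Sum>j\<in>{..<n} - Zset q. tan (\<mu> * L j)) q"
  by (intro isCont_sum ballI isCont_tan_lin) (auto simp: Zset_def)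

lemma neg_right:
  assumes qP: "q \<in> Pset" and qp: "q < p'"
  shows "\<exists>a. q < a \<and> a < p' \<and> sF a < 0"
proof -
  have q: "0 < q" "q < k" using P_range[OF qP] by auto
  define ll where "ll = pi / (2 * q)"
  have lpos: "ll > 0" unfolding ll_def using q by simp
  have ql: "q * ll = pi/2" unfolding ll_def using q by simp
  define R where "R = (\<lambda>\<mu>. \<Sum>j\<in>{..<n} - Zset q. tan (\<mu> * L j))"
  have G: "card (Zset q) \<ge> 1"
  proof -
    have "Zset q \<noteq> {}" using inP_iff[OF q] qP by simp
    moreover have "finite (Zset q)" unfolding Zset_def by simp
    ultimately show ?thesis by (simp add: Suc_le_eq card_gt_0_iff)
  qed
  have "R \<midarrow>q\<rightarrow> R q" using R_cont[OF q] unfolding R_def isCont_def by simp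
  from LIM_D[OF this, of 1] obtain s where s: "s > 0" "\<forall>x. x \<noteq> q \<and> norm (x - q) < s \<longrightarrow> norm (R x - R q) < 1"
    by auto
  obtain d where d: "d > 0" "\<forall>x. pi/2 < x \<and> x < pi/2 + d \<longrightarrow> tan x < - (\<bar>R q\<bar> + 1)"
    using tan_small_right by blast
  define e where "e = min s (min (d / ll) (p' - q))"
  have m: "e > 0" using s d lpos qp unfolding e_def by simp
  have e: "e \<le> s" "e \<le> d / ll" "e \<le> p' - q" unfolding e_def by auto
  define a where "a = q + e / 2"
  have a1: "q < a" "a < p'" "a - q < s" "a - q < d / ll" using m e unfolding a_def by linarith+
  have "(a - q) * ll < d" using a1(4) lpos by (simp add: field_simps)
  moreover have "q * ll < a * ll" using a1 lpos by simp
  ultimately have "pi/2 < a * ll" "a * ll < pi/2 + d" using ql by (simp_all add: algebra_simps)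
  hence ta: "tan (a * ll) < - (\<bar>R q\<bar> + 1)" using d by blast
  have "norm (R a - R q) < 1" using s a1 by auto
  hence Ra: "R a < R q + 1" by simp
  have "real (card (Zset q)) * tan (a * ll) \<le> 1 * tan (a * ll)"
    using G ta by (intro mult_right_mono_neg) auto
  hence "sF a < 0" using sF_split[OF q, of a] ta Ra unfolding R_def ll_def by linarith
  thus ?thesis using a1 by blast
qed

lemma pos_left:
  assumes pP: "p \<in> Pset" and qp: "q' < p"
  shows "\<exists>b. q' < b \<and> b < p \<and> sF b > 0"
proof -
  have q: "0 < p" "p < k" using P_range[OF pP] by auto
  define ll where "ll = pi / (2 * p)"
  have lpos: "ll > 0" unfolding ll_def using q by simp
  have ql: "p * ll = pi/2" unfolding ll_def using q by simp
  define R where "R = (\<lambda>\<mu>. \<Sum>j\<in>{..<n} - Zset p. tan (\<mu> * L j))"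
  have G: "card (Zset p) \<ge> 1"
  proof -
    have "Zset p \<noteq> {}" using inP_iff[OF q] pP by simp
    moreover have "finite (Zset p)" unfolding Zset_def by simp
    ultimately show ?thesis by (simp add: Suc_le_eq card_gt_0_iff)
  qed
  have "R \<midarrow>p\<rightarrow> R p" using R_cont[OF q] unfolding R_def isCont_def by simp
  from LIM_D[OF this, of 1] obtain s where s: "s > 0" "\<forall>x. x \<noteq> p \<and> norm (x - p) < s \<longrightarrow> norm (R x - R p) < 1"
    by auto
  obtain d where d: "d > 0" "\<forall>x. pi/2 - d < x \<and> x < pi/2 \<longrightarrow> \<bar>R p\<bar> + 1 < tan x"
    using tan_big_left by blast
  define e where "e = min s (min (d / ll) (p - q'))"
  have m: "e > 0" using s d lpos qp unfolding e_def by simp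
  have e: "e \<le> s" "e \<le> d / ll" "e \<le> p - q'" unfolding e_def by auto
  define b where "b = p - e / 2"
  have b1: "b < p" "q' < b" "p - b < s" "p - b < d / ll" using m e unfolding b_def by linarith+
  have "(p - b) * ll < d" using b1(4) lpos by (simp add: field_simps)
  moreover have "b * ll < p * ll" using b1 lpos by simp
  ultimately have "b * ll < pi/2" "pi/2 - d < b * ll" using ql by (simp_all add: algebra_simps)
  hence ta: "\<bar>R p\<bar> + 1 < tan (b * ll)" using d by blast
  have "norm (R b - R p) < 1" using s b1 by auto
  hence Rb: "R p - 1 < R b" by simp
  have "1 * tan (b * ll) \<le> real (card (Zset p)) * tan (b * ll)"
    using G ta by (intro mult_right_mono) auto
  hence "sF b > 0" using sF_split[OF q, of b] ta Rb unfolding R_def ll_def by linarith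
  thus ?thesis using b1 by blast
qed

lemma zero_between:
  assumes qP: "q \<in> Pset" and pP: "p \<in> Pset" and qp: "q < p"
    and np: "\<forall>r\<in>Pset. \<not> (q < r \<and> r < p)"
  shows "\<exists>z. q < z \<and> z < p \<and> sF z = 0"
proof -
  obtain a where a: "q < a" "a < p" "sF a < 0" using neg_right[OF qP qp] by blast
  obtain b where b: "a < b" "b < p" "sF b > 0" using pos_left[OF pP a(2)] by blast
  have q0: "0 < q" using P_range[OF qP] by simp
  have pk: "p < k" using P_range[OF pP] by simp
  have "continuous_on {a..b} sF"
  proof (intro continuous_at_imp_continuous_on ballI sF_cont allI impI)
    fix \<mu> j assume mu: "\<mu> \<in> {a..b}" and j: "j < n"
    have r: "0 < \<mu>" "\<mu> < k" using mu a b q0 pk by auto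
    have "\<mu> \<notin> Pset" using np mu a b by force
    hence "Zset \<mu> = {}" using inP_iff[OF r] by simp
    thus "cos (\<mu> * L j) \<noteq> 0" using j unfolding Zset_def by blast
  qed
  then obtain z where z: "a \<le> z" "z \<le> b" "sF z = 0" using IVT'[of sF a 0 b] a b by force
  thus ?thesis using a b by (intro exI[of _ z]) auto
qed


definition nxt :: "real \<Rightarrow> real" where "nxt z = Min {p \<in> Pset. z < p}"

lemma Zs_D: "z \<in> Zs \<Longrightarrow> 0 < z \<and> z < k \<and> z \<notin> Pset \<and> sF z = 0"
  unfolding Zs_def using inP_iff by auto

lemma nxt_ok:
  assumes z: "z \<in> Zs"
  shows "nxt z \<in> Pset" "z < nxt z" "nxt z \<noteq> Min Pset" "\<And>r. r \<in> Pset \<Longrightarrow> z < r \<Longrightarrow> nxt z \<le> r"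
proof -
  have zz: "0 < z" "z < k" "z \<notin> Pset" "sF z = 0" using Zs_D[OF z] by auto
  have fin: "finite {p \<in> Pset. z < p}" using finP by simp
  have ne: "{p \<in> Pset. z < p} \<noteq> {}"
  proof
    assume e: "{p \<in> Pset. z < p} = {}"
    have "Max Pset \<in> Pset" using Max_in[OF finP P_ne] .
    hence "Max Pset \<le> z" using e by force
    hence "Max Pset < z" using zz(3) \<open>Max Pset \<in> Pset\<close> by (cases "Max Pset = z") auto
    hence "sF z < 0" using sF_neg_high zz by blast
    thus False using zz by simp
  qed
  have "nxt z \<in> {p \<in> Pset. z < p}" unfolding nxt_def using Min_in[OF fin ne] .
  thus P1: "nxt z \<in> Pset" and P2: "z < nxt z" by auto
  show "\<And>r. r \<in> Pset \<Longrightarrow> z < r \<Longrightarrow> nxt z \<le> r" unfolding nxt_def using fin by simp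
  show "nxt z \<noteq> Min Pset"
  proof
    assume "nxt z = Min Pset"
    hence "z < Min Pset" using P2 by simp
    hence "sF z > 0" using sF_pos_low zz by blast
    thus False using zz by simp
  qed
qed

lemma nxt_inj: "inj_on nxt Zs"
proof -
  have key: False if z: "z1 \<in> Zs" "z2 \<in> Zs" "z1 < z2" "nxt z1 = nxt z2" for z1 z2
  proof -
    have z1: "0 < z1" "z1 \<notin> Pset" "sF z1 = 0" using Zs_D[OF z(1)] by auto
    have z2: "z2 < k" "sF z2 = 0" using Zs_D[OF z(2)] by auto
    have "\<forall>r\<in>Pset. \<not> (z1 \<le> r \<and> r \<le> z2)"
    proof (intro ballI notI)
      fix r assume r: "r \<in> Pset" "z1 \<le> r \<and> r \<le> z2"
      hence "z1 < r" using z1 by (cases "r = z1") auto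
      hence "nxt z1 \<le> r" using nxt_ok(4)[OF z(1) r(1)] by blast
      moreover have "z2 < nxt z2" using nxt_ok(2)[OF z(2)] .
      ultimately show False using r z by simp
    qed
    hence "sF z1 < sF z2" using z z1 z2 by (intro sF_mono nopole_crit) auto
    thus False using z1 z2 by simp
  qed
  show ?thesis
  proof (rule inj_onI)
    fix z1 z2 assume a: "z1 \<in> Zs" "z2 \<in> Zs" "nxt z1 = nxt z2"
    show "z1 = z2"
    proof (rule ccontr)
      assume "z1 \<noteq> z2"
      hence "z1 < z2 \<or> z2 < z1" by auto
      thus False using key a by metis
    qed
  qed
qed

lemma nxt_surj: "nxt ` Zs = Pset - {Min Pset}"
proof (intro set_eqI iffI)
  fix p assume "p \<in> nxt ` Zs"
  then obtain z where "z \<in> Zs" "p = nxt z" by blast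
  thus "p \<in> Pset - {Min Pset}" using nxt_ok by auto
next
  fix p assume p: "p \<in> Pset - {Min Pset}"
  have pP: "p \<in> Pset" using p by simp
  have "Min Pset \<le> p" using pP finP by simp
  hence mp: "Min Pset < p" using p by auto
  define S where "S = {r \<in> Pset. r < p}"
  have finS: "finite S" unfolding S_def using finP by simp
  have neS: "S \<noteq> {}" unfolding S_def using mp Min_in[OF finP P_ne] by blast
  define q where "q = Max S"
  have qS: "q \<in> S" unfolding q_def using Max_in[OF finS neS] .
  hence qP: "q \<in> Pset" and qp: "q < p" unfolding S_def by auto
  have np: "\<forall>r\<in>Pset. \<not> (q < r \<and> r < p)"
  proof (intro ballI notI)
    fix r assume "r \<in> Pset" "q < r \<and> r < p"
    hence "r \<in> S" "q < r" unfolding S_def by auto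
    thus False using finS unfolding q_def by (meson Max_ge leD)
  qed
  obtain z where z: "q < z" "z < p" "sF z = 0" using zero_between[OF qP pP qp np] by blast
  have q0: "0 < q" using P_range[OF qP] by simp
  have pk: "p < k" using P_range[OF pP] by simp
  have zr: "0 < z" "z < k" using z q0 pk by auto
  have znP: "z \<notin> Pset" using np z by blast
  hence zZ: "z \<in> Zs" unfolding Zs_def using inP_iff[OF zr] zr z by auto
  have "nxt z \<le> p" using nxt_ok(4)[OF zZ pP z(2)] .
  moreover have "\<not> nxt z < p" using np nxt_ok(1,2)[OF zZ] z by force
  ultimately have "nxt z = p" by simp
  thus "p \<in> nxt ` Zs" using zZ by force
qed

lemma card_Zs: "finite Zs \<and> card Zs = card Pset - 1"
proof -
  have b: "bij_betw nxt Zs (Pset - {Min Pset})" unfolding bij_betw_def using nxt_inj nxt_surj by simp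
  have "finite (Pset - {Min Pset})" using finP by simp
  hence fZ: "finite Zs" using bij_betw_finite[OF b] by simp
  have "card Zs = card (Pset - {Min Pset})" using bij_betw_same_card[OF b] .
  also have "\<dots> = card Pset - 1" using Min_in[OF finP P_ne] finP by simp
  finally show ?thesis using fZ by simp
qed


lemma sum_cardZ: "(\<Sum>p\<in>Pset. card (Zset p)) = card Jset"
proof -
  have "card Jset = (\<Sum>j\<in>Jset. 1)" by (rule card_eq_sum)
  also have "\<dots> = (\<Sum>p\<in>pole ` Jset. \<Sum>j\<in>{x. x \<in> Jset \<and> pole x = p}. 1)"
    by (rule sum.image_gen[OF finJ])
  also have "\<dots> = (\<Sum>p\<in>Pset. card (Zset p))"
    unfolding Pset_def
  proof (rule sum.cong)
    fix p assume "p \<in> pole ` Jset"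
    hence "p \<in> Pset" unfolding Pset_def .
    hence "Zset p = {x. x \<in> Jset \<and> pole x = p}" using Zset_eq P_range by auto
    thus "(\<Sum>j\<in>{x. x \<in> Jset \<and> pole x = p}. 1) = card (Zset p)" by simp
  qed simp
  finally show ?thesis by simp
qed

lemma spec_pos_count: "spec_pos n L k = card Jset"
proof -
  define D where "D \<mu> = multiplicity_sg n L (\<mu>^2)" for \<mu>
  define W where "W = insert 0 (Pset \<union> Zs)"
  have n0: "n > 0" using n2 by simp
  have finZs: "finite Zs" and cZs: "card Zs = card Pset - 1" using card_Zs by auto
  have finW: "finite W" unfolding W_def using finP finZs by simp
  have Wr: "0 \<le> \<mu> \<and> \<mu> < k" if "\<mu> \<in> W" for \<mu>
  proof -
    have "\<mu> = 0 \<or> \<mu> \<in> Pset \<or> \<mu> \<in> Zs" using that unfolding W_def by blast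
    thus ?thesis using P_range[of \<mu>] Zs_D[of \<mu>] kpos by auto
  qed
  have D0: "D 0 = 1" unfolding D_def using dim_mu0[OF Lpos n0] by simp
  have sinnz: "\<forall>j<n. sin (\<mu> * L j) \<noteq> 0" if "0 < \<mu>" "\<mu> < k" for \<mu>
  proof (intro allI impI)
    fix j assume "j < n"
    hence "0 < \<mu> * L j \<and> \<mu> * L j < pi" using th_range that by simp
    thus "sin (\<mu> * L j) \<noteq> 0" using sin_gt_zero by force
  qed
  have DP: "D p = card (Zset p) - 1" if "p \<in> Pset" for p
  proof -
    have r: "0 < p" "p < k" using P_range[OF that] by auto
    show ?thesis unfolding D_def
      by (rule dim_pole[OF Lpos _ sinnz[OF r]]) (use r inP_iff[OF r] that Zset_def in auto)
  qed
  have DZ: "D z = 1" if "z \<in> Zs" for z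
  proof -
    have zz: "0 < z" "z < k" "Zset z = {}" "sF z = 0" using that unfolding Zs_def by auto
    have "\<forall>j<n. cos (z * L j) \<noteq> 0" using zz(3) unfolding Zset_def by blast
    thus ?thesis unfolding D_def using dim_nopole_zero[OF Lpos n0] zz(4) unfolding sF_def by blast
  qed
  define E where "E = {lam. 0 \<le> lam \<and> lam < k^2 \<and> is_eigenvalue_sg n L lam}"
  have ES: "E \<subseteq> (\<lambda>\<mu>. \<mu>^2) ` W"
  proof
    fix lam assume "lam \<in> E"
    hence l: "0 \<le> lam" "lam < k^2" "is_eigenvalue_sg n L lam" unfolding E_def by auto
    define \<mu> where "\<mu> = sqrt lam"
    have lm: "lam = \<mu>^2" unfolding \<mu>_def using l by simp
    have m0: "0 \<le> \<mu>" unfolding \<mu>_def using l(1) by simp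
    have mk: "\<mu> < k" unfolding \<mu>_def using l(2) kpos real_sqrt_less_mono[of lam "k^2"] by simp
    have "\<mu> \<in> W"
    proof (cases "\<mu> = 0")
      case True thus ?thesis unfolding W_def by simp
    next
      case False
      hence mp: "0 < \<mu>" using m0 by simp
      show ?thesis
      proof (cases "\<mu> \<in> Pset")
        case True thus ?thesis unfolding W_def by simp
      next
        case False
        hence Ze: "Zset \<mu> = {}" using inP_iff[OF mp mk] by simp
        hence cz: "\<forall>j<n. cos (\<mu> * L j) \<noteq> 0" unfolding Zset_def by blast
        have "sF \<mu> = 0"
        proof (rule ccontr)
          assume "sF \<mu> \<noteq> 0"
          hence "eigenspace_sg n L (\<mu>^2) \<subseteq> {0}"
            using eig_nopole_nonzero[OF Lpos n0 cz] mp unfolding sF_def by simp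
          thus False using l(3) lm unfolding is_eigenvalue_sg_def by auto
        qed
        hence "\<mu> \<in> Zs" unfolding Zs_def using mp mk Ze by simp
        thus ?thesis unfolding W_def by simp
      qed
    qed
    thus "lam \<in> (\<lambda>\<mu>. \<mu>^2) ` W" using lm by blast
  qed
  have "spec_pos n L k = (\<Sum>lam\<in>E. multiplicity_sg n L lam)" unfolding spec_pos_def E_def ..
  also have "\<dots> = (\<Sum>lam\<in>(\<lambda>\<mu>. \<mu>^2) ` W. multiplicity_sg n L lam)"
  proof (rule sum.mono_neutral_left[OF _ ES])
    show "finite ((\<lambda>\<mu>. \<mu>^2) ` W)" using finW by simp
    show "\<forall>i\<in>(\<lambda>\<mu>. \<mu>^2) ` W - E. multiplicity_sg n L i = 0"
    proof
      fix lam assume "lam \<in> (\<lambda>\<mu>. \<mu>^2) ` W - E"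
      then obtain \<mu> where m: "\<mu> \<in> W" "lam = \<mu>^2" "lam \<notin> E" by blast
      have "0 \<le> lam" "lam < k^2" using Wr[OF m(1)] m(2) by (auto intro: power_strict_mono)
      hence "\<not> is_eigenvalue_sg n L lam" using m(3) unfolding E_def by blast
      thus "multiplicity_sg n L lam = 0" by (intro mult_zero_if not_eig_sub)
    qed
  qed
  also have "\<dots> = (\<Sum>\<mu>\<in>W. D \<mu>)"
  proof -
    have "inj_on (\<lambda>\<mu>. \<mu>^2) W"
    proof (rule inj_onI)
      fix x y assume "x \<in> W" "y \<in> W" "x^2 = y^2"
      thus "x = y" using Wr by (metis power2_eq_iff_nonneg)
    qed
    thus ?thesis unfolding D_def by (simp add: sum.reindex)
  qed
  also have "\<dots> = D 0 + (\<Sum>\<mu>\<in>Pset. D \<mu>) + (\<Sum>\<mu>\<in>Zs. D \<mu>)"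
  proof -
    have "0 \<notin> Pset \<union> Zs" using P_range Zs_D by force
    hence "(\<Sum>\<mu>\<in>W. D \<mu>) = D 0 + (\<Sum>\<mu>\<in>Pset \<union> Zs. D \<mu>)" unfolding W_def using finP finZs by simp
    moreover have "Pset \<inter> Zs = {}" using Zs_D by blast
    hence "(\<Sum>\<mu>\<in>Pset \<union> Zs. D \<mu>) = (\<Sum>\<mu>\<in>Pset. D \<mu>) + (\<Sum>\<mu>\<in>Zs. D \<mu>)"
      using finP finZs by (simp add: sum.union_disjoint)
    ultimately show ?thesis by simp
  qed
  also have "\<dots> = 1 + (\<Sum>p\<in>Pset. card (Zset p) - 1) + card Zs"
    using D0 DP DZ by simp
  also have "\<dots> = card Jset"
  proof -
    have ge: "card (Zset p) \<ge> 1" if "p \<in> Pset" for p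
    proof -
      have r: "0 < p" "p < k" using P_range[OF that] by auto
      have "Zset p \<noteq> {}" using inP_iff[OF r] that by simp
      moreover have "finite (Zset p)" unfolding Zset_def by simp
      ultimately show ?thesis by (simp add: Suc_le_eq card_gt_0_iff)
    qed
    have "(\<Sum>p\<in>Pset. card (Zset p) - 1) + card Pset = (\<Sum>p\<in>Pset. card (Zset p) - 1 + 1)"
      unfolding sum.distrib by simp
    also have "\<dots> = (\<Sum>p\<in>Pset. card (Zset p))" by (rule sum.cong) (use ge in \<open>force+\<close>)
    also have "\<dots> = card Jset" by (rule sum_cardZ)
    finally have X: "(\<Sum>p\<in>Pset. card (Zset p) - 1) + card Pset = card Jset" .
    have "card Pset \<ge> 1" using P_ne finP by (simp add: Suc_le_eq card_gt_0_iff)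
    thus ?thesis using X cZs by simp
  qed
  finally show ?thesis .
qed


lemma spec_pos_count': "spec_pos n L k = card {j. j < n \<and> pi/2 < k * L j}"
  using spec_pos_count unfolding Jset_def .

end



theorem lemma3p2:
  fixes n :: nat and L :: "nat \<Rightarrow> real" and k :: real
    and f :: "nat \<Rightarrow> real \<Rightarrow> real"
  assumes "star_graph n L"
    and "k > 0"
    and "generic_sg n L (k^2) f"
    and "no_neumann_points n L (k^2) f"
  shows "\<exists>n' L'. star_graph n' L' \<and> n' = n \<and>
           (\<exists>g. generic_sg n' L' (k^2) g \<and> no_neumann_points n' L' (k^2) g) \<and>
           spec_pos n L k + spec_pos n' L' k = n \<and>
           wl_capacity n L k + wl_capacity n' L' k = real n"
proof -
  have n2: "n \<ge> 2" and Lpos: "\<forall>j<n. L j > 0" using assms(1) unfolding star_graph_def by auto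
  have kpos: "k > 0" by fact
  obtain df where e: "eig_sol n L (k^2) f df" and nn: "\<forall>j<n. \<forall>x\<in>{0<..<L j}. df j x \<noteq> 0"
    using assms(4) unfolding no_neumann_points_def by blast
  have gv: "\<forall>j<n. f j 0 \<noteq> 0 \<and> f j (L j) \<noteq> 0" using assms(3) unfolding generic_sg_def by blast
  obtain df' where e': "eig_sol n L (k^2) f df'" and d0: "\<forall>j<n. df' j 0 \<noteq> 0"
    using assms(3) unfolding generic_sg_def by blast
  define A where "A j = f j (L j)" for j
  have fA: "f = Phi n L k A" using eig_sol_form(1)[OF Lpos e] unfolding A_def by simp
  have cA: "conds n L k A" using eig_sol_form(2)[OF Lpos e] unfolding A_def by simp
  have dfA: "\<forall>j<n. \<forall>x\<in>{0..L j}. df j x = A j * k * sin (k * (L j - x))"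
    using eig_sol_form(3)[OF Lpos e] unfolding A_def by simp
  have df'A: "\<forall>j<n. \<forall>x\<in>{0..L j}. df' j x = A j * k * sin (k * (L j - x))"
    using eig_sol_form(3)[OF Lpos e'] unfolding A_def by simp
  have L0: "0 \<le> L j" if "j < n" for j using Lpos that by (simp add: less_imp_le)
  have f0: "f j 0 = A j * cos (k * L j)" if "j < n" for j
    using that L0[OF that] unfolding fA by (simp add: Phi_def)
  define c where "c = f 0 0"
  have c0: "c \<noteq> 0" unfolding c_def using gv n2 by simp
  have fc: "A j * cos (k * L j) = c" if "j < n" for j
  proof -
    have "A j * cos (k * L j) = A 0 * cos (k * L 0)" using cA that n2 unfolding conds_def by (metis less_le_trans pos2)
    thus ?thesis using f0[of 0] n2 unfolding c_def by simp
  qed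
  have Anz: "A j \<noteq> 0" if "j < n" for j using fc[OF that] c0 by auto
  have cosnz: "cos (k * L j) \<noteq> 0" if "j < n" for j using fc[OF that] c0 by auto
  have kLpos: "0 < k * L j" if "j < n" for j using Lpos that kpos by simp
  have kLpi: "k * L j < pi" if j: "j < n" for j
  proof (rule ccontr)
    assume "\<not> k * L j < pi"
    hence ge: "pi \<le> k * L j" by simp
    show False
    proof (cases "k * L j = pi")
      case True
      have "df' j 0 = A j * k * sin (k * (L j - 0))" using df'A j L0[OF j] by simp
      also have "\<dots> = 0" using True by simp
      finally show False using d0 j by simp
    next
      case False
      define x where "x = L j - pi / k"
      have "pi / k < L j" using ge False kpos by (simp add: field_simps)
      moreover have "0 < pi / k" using kpos by simp
      ultimately have x: "x \<in> {0<..<L j}" unfolding x_def by simp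
      have "k * (L j - x) = pi" unfolding x_def using kpos by simp
      hence "df j x = 0" using dfA j x by simp
      thus False using nn j x by blast
    qed
  qed
  have sumtan: "(\<Sum>j<n. tan (k * L j)) = 0"
  proof -
    have "(\<Sum>j<n. A j * k * sin (k * L j)) = 0" using cA unfolding conds_def by blast
    moreover have "(\<Sum>j<n. A j * k * sin (k * L j)) = c * k * (\<Sum>j<n. tan (k * L j))"
      unfolding sum_distrib_left
    proof (rule sum.cong)
      fix j assume "j \<in> {..<n}"
      hence j: "j < n" by simp
      have "A j = c / cos (k * L j)" using fc[OF j] cosnz[OF j] by (simp add: field_simps)
      thus "A j * k * sin (k * L j) = c * k * tan (k * L j)" by (simp add: tan_def)
    qed simp
    ultimately show ?thesis using c0 kpos by simp
  qed
  define L' where "L' j = pi / k - L j" for j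
  have kL': "k * L' j = pi - k * L j" for j unfolding L'_def using kpos by (simp add: algebra_simps)
  have L'pos: "\<forall>j<n. L' j > 0"
  proof (intro allI impI)
    fix j assume j: "j < n"
    have "k * L' j > 0" using kL' kLpi[OF j] by simp
    thus "L' j > 0" using kpos by (simp add: zero_less_mult_iff)
  qed
  have L'0: "0 \<le> L' j" if "j < n" for j using L'pos that by (simp add: less_imp_le)
  have cos': "cos (k * L' j) = - cos (k * L j)" for j unfolding kL' by simp
  have sin': "sin (k * L' j) = sin (k * L j)" for j unfolding kL' by simp
  have tan': "tan (k * L' j) = - tan (k * L j)" for j unfolding tan_def cos' sin' by simp
  have cA': "conds n L' k A"
    unfolding conds_def
  proof (intro conjI allI impI)
    fix i j assume "i < n" "j < n"
    thus "A i * cos (k * L' i) = A j * cos (k * L' j)" unfolding cos' using fc by simp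
  next
    show "(\<Sum>j<n. A j * k * sin (k * L' j)) = 0" unfolding sin' using cA unfolding conds_def by blast
  qed
  define g where "g = Phi n L' k A"
  have eg: "eig_sol n L' (k^2) g (dPhi L' k A)" unfolding g_def by (rule eig_sol_Phi[OF L'pos cA'])
  have sinpos: "sin (k * (L' j - x)) > 0" if j: "j < n" and x: "x \<in> {0..<L' j}" for j x
  proof (rule sin_gt_zero)
    show "0 < k * (L' j - x)" using x kpos by simp
    have "k * (L' j - x) \<le> k * L' j" using x kpos by (simp add: algebra_simps)
    thus "k * (L' j - x) < pi" using kL' kLpos[OF j] by simp
  qed
  have gen: "generic_sg n L' (k^2) g"
    unfolding generic_sg_def eigenfunction_sg_def
  proof (intro conjI)
    show "g \<in> eigenspace_sg n L' (k^2)" unfolding eigenspace_sg_def using eg by blast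
    show "g \<noteq> 0" unfolding g_def using n2 L'0 Anz by (intro Phi_nonzero[of 0]) auto
    show "multiplicity_sg n L' (k^2) = 1"
      using dim_nopole_zero[OF L'pos _ _, of k] n2 cos' cosnz tan' sumtan by (simp add: sum_negf)
    show "\<forall>j<n. g j 0 \<noteq> 0 \<and> g j (L' j) \<noteq> 0"
    proof (intro allI impI conjI)
      fix j assume j: "j < n"
      show "g j 0 \<noteq> 0" unfolding g_def using j L'0[OF j] Anz[OF j] cosnz[OF j] cos' by (simp add: Phi_def)
      show "g j (L' j) \<noteq> 0" unfolding g_def using Phi_end[of j n L' k A] j L'0[OF j] Anz[OF j] by simp
    qed
    show "\<exists>df. eig_sol n L' (k^2) g df \<and> (\<forall>j<n. df j 0 \<noteq> 0)"
    proof (intro exI conjI allI impI)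
      show "eig_sol n L' (k^2) g (dPhi L' k A)" by (rule eg)
      fix j assume j: "j < n"
      have "0 \<in> {0..<L' j}" using L'pos j by simp
      hence "sin (k * (L' j - 0)) > 0" by (rule sinpos[OF j])
      thus "dPhi L' k A j 0 \<noteq> 0" unfolding dPhi_def using Anz[OF j] kpos by simp
    qed
  qed
  have nn': "no_neumann_points n L' (k^2) g"
    unfolding no_neumann_points_def
  proof (intro exI conjI allI impI ballI)
    show "eig_sol n L' (k^2) g (dPhi L' k A)" by (rule eg)
    fix j x assume j: "j < n" and x: "x \<in> {0<..<L' j}"
    have "sin (k * (L' j - x)) > 0" using sinpos[OF j] x by simp
    thus "dPhi L' k A j x \<noteq> 0" unfolding dPhi_def using Anz[OF j] kpos by simp
  qed
  have sp1: "spec_pos n L k = card {j. j < n \<and> pi/2 < k * L j}"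
    by (rule spec_pos_count'[OF Lpos n2 kpos]) (use kLpi cosnz sumtan in auto)
  have sp2: "spec_pos n L' k = card {j. j < n \<and> pi/2 < k * L' j}"
    by (rule spec_pos_count'[OF L'pos n2 kpos]) (use kL' kLpos cos' cosnz tan' sumtan in \<open>auto simp: sum_negf\<close>)
  have "card {j. j < n \<and> pi/2 < k * L j} + card {j. j < n \<and> pi/2 < k * L' j} = n"
  proof -
    have u: "{j. j < n \<and> pi/2 < k * L j} \<union> {j. j < n \<and> pi/2 < k * L' j} = {..<n}"
    proof (intro set_eqI iffI)
      fix j assume "j \<in> {..<n}"
      hence j: "j < n" by simp
      have "k * L j \<noteq> pi/2"
      proof
        assume h: "k * L j = pi/2"
        have "cos (k * L j) = 0" unfolding h by simp
        thus False using cosnz[OF j] by simp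
      qed
      thus "j \<in> {j. j < n \<and> pi/2 < k * L j} \<union> {j. j < n \<and> pi/2 < k * L' j}" using j kL'[of j] by auto
    qed auto
    have "card ({j. j < n \<and> pi/2 < k * L j} \<union> {j. j < n \<and> pi/2 < k * L' j}) =
          card {j. j < n \<and> pi/2 < k * L j} + card {j. j < n \<and> pi/2 < k * L' j}"
      by (rule card_Un_disjoint) (auto simp: kL')
    thus ?thesis unfolding u by simp
  qed
  hence sp: "spec_pos n L k + spec_pos n L' k = n" using sp1 sp2 by simp
  have wl: "wl_capacity n L k + wl_capacity n L' k = real n"
  proof -
    have "total_length n L + total_length n L' = real n * (pi / k)"
      unfolding total_length_def L'_def by (simp add: sum.distrib[symmetric])
    hence "wl_capacity n L k + wl_capacity n L' k = real n * (pi / k) * k / pi"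
      unfolding wl_capacity_def by (simp add: add_divide_distrib[symmetric] distrib_right[symmetric])
    thus ?thesis using kpos by simp
  qed
  have "star_graph n L'" unfolding star_graph_def using n2 L'pos by simp
  thus ?thesis using gen nn' sp wl by blast
qed


end
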